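(* Let $x,y,z$ be real numbers with $x\ge 2$ such that $\Psi(x+z,y)-\Psi(x,y)>\pi(y)$. Then $g(\lfloor x\rfloor)<z$.
   Context: $\pi(y)$ is the number of primes $\le y$. For real $x,y$, $\Psi(x,y)$ denotes the number of positive integers $\le x$ all of whose prime factors are $\le y$. For integers $n>1$ and $k\ge 1$, say that $(n,k)$ has a prime representation if there are distinct primes $P_1,\dots,P_k$ with $P_j\mid (n+j)$ for $1\le j\le k$; $g(n)$ is the largest positive integer $k$ such that $(n,k)$ has a prime representation. *)

theory Defs
  imports Complex_Main "HOL-Computational_Algebra.Primes"
begin

definition prime_pi :: "real \<Rightarrow> nat" where
  "prime_pi y = card {p::nat. prime p \<and> real p \<le> y}"

definition Psi :: "real \<Rightarrow> real \<Rightarrow> nat" where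
  "Psi x y = card {m::nat. 1 \<le> m \<and> real m \<le> x \<and> (\<forall>p. prime p \<and> p dvd m \<longrightarrow> real p \<le> y)}"

definition prime_rep :: "nat \<Rightarrow> nat \<Rightarrow> bool" where
  "prime_rep n k \<longleftrightarrow> (\<exists>P::nat \<Rightarrow> nat. inj_on P {1..k} \<and>
      (\<forall>j\<in>{1..k}. prime (P j) \<and> P j dvd n + j))"

definition g :: "nat \<Rightarrow> nat" where
  "g n = (GREATEST k. 1 \<le> k \<and> prime_rep n k)"

end

theory Submission
  imports Defs
begin

definition smooth :: "real \<Rightarrow> nat \<Rightarrow> bool" where
  "smooth y m \<longleftrightarrow> (\<forall>p. prime p \<and> p dvd m \<longrightarrow> real p \<le> y)"

lemma Psi_fin: "finite {m::nat. 1 \<le> m \<and> real m \<le> x \<and> P m}"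
proof -
  have "{m::nat. 1 \<le> m \<and> real m \<le> x \<and> P m} \<subseteq> {..nat \<lceil>x\<rceil>}"
    by auto (meson le_nat_iff of_nat_le_iff order_trans le_of_int_ceiling of_int_of_nat_eq real_nat_ceiling_ge)
  then show ?thesis using finite_subset by blast
qed

lemma key:
  fixes x y z :: real
  assumes x2: "x \<ge> 2"
    and h: "real (Psi (x + z) y) - real (Psi x y) > real (prime_pi y)"
    and pr: "prime_rep (nat \<lfloor>x\<rfloor>) k"
  shows "real k < z"
proof (rule ccontr)
  assume "\<not> real k < z"
  hence kz: "z \<le> real k" by simp
  define n where "n = nat \<lfloor>x\<rfloor>"
  have nx: "real n \<le> x" "x < real n + 1" using x2 unfolding n_def by linarith+
  obtain P where Pinj: "inj_on P {1..k}" and PP: "\<forall>j\<in>{1..k}. prime (P j) \<and> P j dvd n + j"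
    using pr unfolding prime_rep_def n_def by blast
  define A where "A = {m::nat. 1 \<le> m \<and> real m \<le> x + z \<and> (\<forall>p. prime p \<and> p dvd m \<longrightarrow> real p \<le> y)}"
  define B where "B = {m::nat. 1 \<le> m \<and> real m \<le> x \<and> (\<forall>p. prime p \<and> p dvd m \<longrightarrow> real p \<le> y)}"
  define S where "S = {m::nat. x < real m \<and> real m \<le> x + z \<and> (\<forall>p. prime p \<and> p dvd m \<longrightarrow> real p \<le> y)}"
  have fA: "finite A" unfolding A_def by (rule Psi_fin)
  have fB: "finite B" unfolding B_def by (rule Psi_fin)
  have "A \<subseteq> B \<union> S" unfolding A_def B_def S_def by auto
  have fS: "finite S"
    by (rule finite_subset[OF _ Psi_fin[of "x+z" "\<lambda>m. True"]]) (auto simp: S_def, use x2 in linarith)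
  have "card A \<le> card (B \<union> S)" using \<open>A \<subseteq> B \<union> S\<close> fB fS by (simp add: card_mono)
  also have "\<dots> \<le> card B + card S" by (rule card_Un_le)
  finally have cA: "card A \<le> card B + card S" .
  have cS: "card S > prime_pi y"
    using h cA unfolding Psi_def A_def[symmetric] B_def[symmetric] by linarith
  define Q where "Q = {p::nat. prime p \<and> real p \<le> y}"
  have fQ: "finite Q"
    by (rule finite_subset[of _ "{..nat \<lceil>y\<rceil>}"]) (auto simp: Q_def, linarith)
  have jr: "m - n \<in> {1..k}" if "m \<in> S" for m
  proof -
    have "x < real m" "real m \<le> x + z" using that by (auto simp: S_def)
    hence "n < m" "m \<le> n + k" using nx kz by linarith+
    thus ?thesis by auto
  qed
  have "(\<lambda>m. P (m - n)) ` S \<subseteq> Q"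
  proof
    fix q assume "q \<in> (\<lambda>m. P (m - n)) ` S"
    then obtain m where m: "m \<in> S" "q = P (m - n)" by auto
    have j: "m - n \<in> {1..k}" using jr[OF m(1)] .
    hence "n + (m - n) = m" by auto
    hence "prime q" "q dvd m" using PP j m(2) by metis+
    thus "q \<in> Q" using m(1) by (auto simp: S_def Q_def)
  qed
  moreover have "inj_on (\<lambda>m. P (m - n)) S"
  proof (rule inj_onI)
    fix a b assume ab: "a \<in> S" "b \<in> S" "P (a - n) = P (b - n)"
    hence "a - n = b - n" using Pinj jr by (meson inj_onD)
    moreover have "a - n \<in> {1..k}" "b - n \<in> {1..k}" using jr ab by auto
    ultimately show "a = b" by auto
  qed
  ultimately have "card S \<le> card Q" using fQ by (meson card_inj_on_le)
  thus False using cS unfolding Q_def prime_pi_def by linarith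
qed

theorem lemma2p4:
  fixes x y z :: real
  assumes "x \<ge> 2"
    and "real (Psi (x + z) y) - real (Psi x y) > real (prime_pi y)"
  shows "real (g (nat \<lfloor>x\<rfloor>)) < z"
proof -
  define n where "n = nat \<lfloor>x\<rfloor>"
  have bnd: "k \<le> nat \<lceil>z\<rceil>" if "1 \<le> k \<and> prime_rep n k" for k
    using key[OF assms, of k] that unfolding n_def by linarith
  have "n + 1 \<noteq> 1" using assms unfolding n_def by linarith
  then obtain p where p: "prime p" "p dvd n + 1" using prime_factor_nat by blast
  have "prime_rep n 1" unfolding prime_rep_def
    by (rule exI[of _ "\<lambda>_. p"]) (use p in auto)
  hence p1: "1 \<le> (1::nat) \<and> prime_rep n 1" by simp
  have "1 \<le> g n \<and> prime_rep n (g n)" unfolding g_def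
    by (rule GreatestI_nat[where P="\<lambda>k. 1 \<le> k \<and> prime_rep n k" and k=1 and b="nat \<lceil>z\<rceil>"]) (use p1 bnd in auto)
  thus ?thesis using key[OF assms] unfolding n_def by blast
qed

end
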